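(* Let $\gamma=\begin{pmatrix}A&B\\C&D\end{pmatrix}\in\mathbf{Sp}(2n,\mathbb R)$ with $\gamma\tau(\gamma)=I$ and $C=0$. Then there exists $h\in\mathbf{Sp}(2n,\mathbb R)$ with $\gamma=\tau(h)h^{-1}$ (i.e. the 1-cocycle $f_\gamma$ is cohomologically trivial).
   Context: $\mathbf{Sp}(2n,\mathbb R)$: real $2n\times2n$ matrices $g=\begin{pmatrix}A&B\\C&D\end{pmatrix}$ ($n\times n$ blocks) with ${}^tgJg=J$, $J=\begin{pmatrix}0&I\\-I&0\end{pmatrix}$. $\tau\begin{pmatrix}A&B\\C&D\end{pmatrix}=\begin{pmatrix}A&-B\\-C&D\end{pmatrix}$. $f_\gamma$ denotes the cocycle $\mathrm{Gal}(\mathbb C/\mathbb R)=\{1,\tau\}\to\mathbf{Sp}(2n,\mathbb R)$, $\tau\mapsto\gamma$. *)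

theory Defs
  imports "HOL-Analysis.Analysis"
begin

text \<open>Real 2n x 2n matrices are modelled as real^('n+'n)^('n+'n): the index type
  'n + 'n splits indices into the first block (Inl) and the second block (Inr),
  so that g = [[A,B],[C,D]] with A = entries (Inl,Inl), B = (Inl,Inr),
  C = (Inr,Inl), D = (Inr,Inr).  n = CARD('n).\<close>

type_synonym 'n mat2n = "real^('n + 'n)^('n + 'n)"

definition blkA :: "'n::finite mat2n \<Rightarrow> real^'n^'n" where
  "blkA g = (\<chi> i j. g $ Inl i $ Inl j)"
definition blkB :: "'n::finite mat2n \<Rightarrow> real^'n^'n" where
  "blkB g = (\<chi> i j. g $ Inl i $ Inr j)"
definition blkC :: "'n::finite mat2n \<Rightarrow> real^'n^'n" where
  "blkC g = (\<chi> i j. g $ Inr i $ Inl j)"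
definition blkD :: "'n::finite mat2n \<Rightarrow> real^'n^'n" where
  "blkD g = (\<chi> i j. g $ Inr i $ Inr j)"

definition Jmat :: "'n::finite mat2n" where
  "Jmat = (\<chi> i j. case (i, j) of
      (Inl a, Inr b) \<Rightarrow> (if a = b then 1 else 0)
    | (Inr a, Inl b) \<Rightarrow> (if a = b then -1 else 0)
    | _ \<Rightarrow> 0)"

definition Sp :: "'n::finite mat2n set" where
  "Sp = {g. transpose g ** Jmat ** g = Jmat}"

definition tau :: "'n::finite mat2n \<Rightarrow> 'n mat2n" where
  "tau g = (\<chi> i j. case (i, j) of
      (Inl a, Inl b) \<Rightarrow> g $ i $ j
    | (Inr a, Inr b) \<Rightarrow> g $ i $ j
    | _ \<Rightarrow> - (g $ i $ j))"

end

theory Submission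
  imports Defs
begin


definition mk :: "real^'n^'n \<Rightarrow> real^'n^'n \<Rightarrow> real^'n^'n \<Rightarrow> real^'n^'n \<Rightarrow> 'n::finite mat2n" where
  "mk P Q R S = (\<chi> i j. case i of Inl a \<Rightarrow> (case j of Inl b \<Rightarrow> P$a$b | Inr b \<Rightarrow> Q$a$b)
                                | Inr a \<Rightarrow> (case j of Inl b \<Rightarrow> R$a$b | Inr b \<Rightarrow> S$a$b))"

lemma mk_nth[simp]:
  "mk P Q R S $ Inl a $ Inl b = P$a$b" "mk P Q R S $ Inl a $ Inr b = Q$a$b"
  "mk P Q R S $ Inr a $ Inl b = R$a$b" "mk P Q R S $ Inr a $ Inr b = S$a$b"
  by (simp_all add: mk_def)

lemma ext2n:
  fixes g h :: "'n::finite mat2n"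
  assumes "\<And>a b. g$Inl a$Inl b = h$Inl a$Inl b" "\<And>a b. g$Inl a$Inr b = h$Inl a$Inr b"
    "\<And>a b. g$Inr a$Inl b = h$Inr a$Inl b" "\<And>a b. g$Inr a$Inr b = h$Inr a$Inr b"
  shows "g = h"
  unfolding vec_eq_iff
proof (intro allI)
  fix i j show "g $ i $ j = h $ i $ j" using assms by (cases i; cases j) auto
qed

lemma mk_blk: "g = mk (blkA g) (blkB g) (blkC g) (blkD g)"
  by (rule ext2n) (auto simp: blkA_def blkB_def blkC_def blkD_def split: sum.splits) 

lemma blk_mk[simp]: "blkA (mk P Q R S) = P" "blkB (mk P Q R S) = Q" "blkC (mk P Q R S) = R" "blkD (mk P Q R S) = S"
  by (simp_all add: vec_eq_iff blkA_def blkB_def blkC_def blkD_def)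

lemma mk_eq_iff: "mk P Q R S = mk P' Q' R' S' \<longleftrightarrow> P = P' \<and> Q = Q' \<and> R = R' \<and> S = S'"
  by (metis blk_mk)

lemma sum_UNIV_Plus: "(\<Sum>k\<in>(UNIV::('a::finite + 'b::finite) set). f k) = (\<Sum>k\<in>UNIV. f (Inl k)) + (\<Sum>k\<in>UNIV. f (Inr k))"
  by (subst UNIV_Plus_UNIV[symmetric], subst sum.Plus) (auto simp: comp_def)

lemma mk_mult: "mk P Q R S ** mk P' Q' R' S' = mk (P**P' + Q**R') (P**Q' + Q**S') (R**P' + S**R') (R**Q' + S**S')"
  by (rule ext2n) (auto simp: matrix_matrix_mult_def sum_UNIV_Plus)

lemma mk_transpose: "transpose (mk P Q R S) = mk (transpose P) (transpose R) (transpose Q) (transpose S)"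
  by (rule ext2n) (auto simp: transpose_def split: sum.splits)

lemma tau_mk: "tau (mk P Q R S) = mk P (-Q) (-R) S"
  by (rule ext2n) (auto simp: tau_def split: sum.splits)

lemma J_mk: "(Jmat :: 'n::finite mat2n) = mk 0 (mat 1) (- mat 1) 0"
  by (rule ext2n) (auto simp: Jmat_def mat_def split: sum.splits)

lemma one_mk: "(mat 1 :: 'n::finite mat2n) = mk (mat 1) 0 0 (mat 1)"
  by (rule ext2n) (auto simp: mat_def split: sum.splits)

lemma mk_neg: "- mk P Q R S = mk (-P) (-Q) (-R) (-S)"
  by (rule ext2n) auto

lemma mm_sub_l: "(A::real^'n^'m) ** (B - C) = A ** B - A ** C"
  by (simp add: vec_eq_iff matrix_matrix_mult_def sum_subtractf algebra_simps)
lemma mm_sub_r: "((A::real^'n^'m) - B) ** C = A ** C - B ** C"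
  by (simp add: vec_eq_iff matrix_matrix_mult_def sum_subtractf algebra_simps)
lemma mm_add_r: "((A::real^'n^'m) + B) ** C = A ** C + B ** C"
  by (simp add: vec_eq_iff matrix_matrix_mult_def sum.distrib algebra_simps)
lemma mm_neg_l: "(A::real^'n^'m) ** (- B) = - (A ** B)"
  by (simp add: vec_eq_iff matrix_matrix_mult_def sum_negf)
lemma mm_neg_r: "(- (A::real^'n^'m)) ** B = - (A ** B)"
  by (simp add: vec_eq_iff matrix_matrix_mult_def sum_negf)
lemma tr_add: "transpose ((A::real^'n^'m) + B) = transpose A + transpose B"
  by (simp add: vec_eq_iff transpose_def)
lemma tr_sub: "transpose ((A::real^'n^'m) - B) = transpose A - transpose B"
  by (simp add: vec_eq_iff transpose_def)
lemma tr_neg: "transpose (- (A::real^'n^'m)) = - transpose A"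
  by (simp add: vec_eq_iff transpose_def)
lemma tr_0: "transpose (0::real^'n^'m) = 0"
  by (simp add: vec_eq_iff transpose_def)



lemma half_facts:
  fixes A :: "real^'n::finite^'n"
  assumes AA: "A ** A = mat 1"
  defines "E \<equiv> (1/2) *\<^sub>R (mat 1 + A)" and "F \<equiv> (1/2) *\<^sub>R (mat 1 - A)"
  shows "E ** E = E" "F ** F = F" "E ** F = 0" "F ** E = 0" "A ** E = E" "A ** F = - F"
    "E ** A = E" "F ** A = - F" "E + F = mat 1"
proof -
  have sA: "A ** (mat 1 + A) = mat 1 + A" "(mat 1 + A) ** A = mat 1 + A"
       "A ** (mat 1 - A) = -(mat 1 - A)" "(mat 1 - A) ** A = -(mat 1 - A)"
    by (simp_all add: matrix_add_ldistrib mm_add_r mm_sub_l mm_sub_r AA)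
  have p: "(mat 1 + A) ** (mat 1 + A) = 2 *\<^sub>R (mat 1 + A)"
    "(mat 1 - A) ** (mat 1 - A) = 2 *\<^sub>R (mat 1 - A)"
    "(mat 1 + A) ** (mat 1 - A) = 0" "(mat 1 - A) ** (mat 1 + A) = 0"
    by (simp_all add: matrix_add_ldistrib mm_add_r mm_sub_l mm_sub_r AA scaleR_2 algebra_simps)
  show "E ** E = E" "F ** F = F" "E ** F = 0" "F ** E = 0"
    unfolding E_def F_def
    by (simp_all add: p scalar_matrix_assoc[symmetric] matrix_scalar_ac)
  show "A ** E = E" "A ** F = - F" "E ** A = E" "F ** A = - F"
    unfolding E_def F_def
    by (simp_all add: sA scalar_matrix_assoc[symmetric] matrix_scalar_ac) (simp_all add: algebra_simps)
  have "(mat 1 + A) + (mat 1 - A) = 2 *\<^sub>R (mat 1::real^'n^'n)" by (simp add: scaleR_2)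
  then show "E + F = mat 1" unfolding E_def F_def
    by (metis scaleR_add_right scaleR_one scaleR_scaleR divide_inverse_commute
        field_sum_of_halves mult_2_right scaleR_2 mult.commute inverse_eq_divide nonzero_divide_eq_eq zero_neq_numeral times_divide_eq_left)
qed

lemma tr_mul: "transpose ((A::real^'n::finite^'n) ** B) = transpose B ** transpose A"
  by (rule matrix_transpose_mul)

lemma tr_scale: "transpose (c *\<^sub>R (A::real^'n::finite^'n)) = c *\<^sub>R transpose A"
  by (rule transpose_scalar)

lemma rv1: "-(1/2) *\<^sub>R b + b = -(1/2) *\<^sub>R c + (1/2) *\<^sub>R (b + c)" for b c :: "'a::real_vector"
proof -
  have "-(1/2) *\<^sub>R b + b = (-(1/2) + 1) *\<^sub>R b" by (subst scaleR_add_left) simp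
  also have "\<dots> = (1/2) *\<^sub>R b" by simp
  also have "\<dots> = -(1/2) *\<^sub>R c + (1/2) *\<^sub>R (b + c)" by (simp add: scaleR_add_right)
  finally show ?thesis .
qed
lemma rv2: "-(1/2) *\<^sub>R b + -(1/2) *\<^sub>R c + b = (1/2) *\<^sub>R (b - c)" for b c :: "'a::real_vector"
proof -
  have "-(1/2) *\<^sub>R b + b = (-(1/2) + 1) *\<^sub>R b" by (subst scaleR_add_left) simp
  also have "\<dots> = (1/2) *\<^sub>R b" by simp
  finally have "-(1/2) *\<^sub>R b + b = (1/2) *\<^sub>R b" .
  then show ?thesis by (simp add: scaleR_diff_right algebra_simps)
qed

theorem lemma3p10:
  fixes \<gamma> :: "'n::finite mat2n"
  assumes "\<gamma> \<in> Sp"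
    and "\<gamma> ** tau \<gamma> = mat 1"
    and "blkC \<gamma> = 0"
  shows "\<exists>h \<in> Sp. \<gamma> = tau h ** matrix_inv h"
proof -
  define A where "A = blkA \<gamma>"
  define B where "B = blkB \<gamma>"
  define D where "D = blkD \<gamma>"
  have g: "\<gamma> = mk A B 0 D" using mk_blk[of \<gamma>] assms(3) by (simp add: A_def B_def D_def)
  have "mk A B 0 D ** mk A (-B) 0 D = mk (mat 1) 0 0 (mat 1)"
    using assms(2) by (simp add: g tau_mk one_mk)
  then have f1: "A ** A = mat 1" and f2: "A ** B = B ** D"
    by (simp_all add: mk_mult mk_eq_iff mm_neg_l)
  have "transpose (mk A B 0 D) ** Jmat ** mk A B 0 D = Jmat"
    using assms(1) by (simp add: g Sp_def)
  then have f3: "transpose A ** D = mat 1" and f4: "transpose B ** D = transpose D ** B"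
    by (simp_all add: mk_transpose J_mk mk_mult mk_eq_iff mm_neg_l mm_neg_r tr_0)
  have tA2: "transpose A ** transpose A = mat 1" using f1 by (metis tr_mul transpose_mat)
  have DA: "D = transpose A"
    by (metis f3 tA2 matrix_mul_assoc matrix_mul_lid matrix_mul_rid)
  have f2': "A ** B = B ** transpose A" using f2 DA by simp
  have symAB: "transpose (A ** B) = A ** B"
  proof -
    have "transpose (A ** B) = transpose B ** transpose A" by (rule tr_mul)
    also have "\<dots> = A ** B" using f4 DA by simp
    finally show ?thesis .
  qed
  define E where "E = (1/2) *\<^sub>R (mat 1 + A)"
  define F where "F = (1/2) *\<^sub>R (mat 1 - A)"
  note hf = half_facts[OF f1, folded E_def F_def]
  have tE: "transpose E = (1/2) *\<^sub>R (mat 1 + transpose A)" unfolding E_def by (simp add: tr_scale tr_add)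
  have tF: "transpose F = (1/2) *\<^sub>R (mat 1 - transpose A)" unfolding F_def by (simp add: tr_scale tr_sub)
  have BtF: "B ** transpose F = F ** B" unfolding tF unfolding F_def
    by (simp add: matrix_scalar_ac scalar_matrix_assoc[symmetric] mm_sub_l mm_sub_r f2' scaleR_diff_right)
  have BtE: "B ** transpose E = E ** B" unfolding tE unfolding E_def
    by (simp add: matrix_scalar_ac scalar_matrix_assoc[symmetric] matrix_add_ldistrib mm_add_r f2' scaleR_add_right)
  have tEE: "transpose E ** transpose E = transpose E" by (metis hf(1) tr_mul)
  have tFF: "transpose F ** transpose F = transpose F" by (metis hf(2) tr_mul)
  have tFE: "transpose F ** transpose E = 0" by (metis hf(3) tr_mul tr_0)
  have tEF: "transpose E ** transpose F = 0" by (metis hf(4) tr_mul tr_0)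
  have tAF: "transpose A ** transpose F = - transpose F" by (metis hf(8) tr_mul tr_neg)
  have tAE: "transpose A ** transpose E = transpose E" by (metis hf(7) tr_mul)
  define X where "X = - (1/2) *\<^sub>R (A ** B)"
  have tX: "transpose X = X" unfolding X_def by (simp add: tr_neg tr_scale symAB)
  have AX: "A ** X = - (1/2) *\<^sub>R B" unfolding X_def
    by (simp add: matrix_scalar_ac scalar_matrix_assoc[symmetric] mm_neg_l matrix_mul_assoc f1)
  have L1: "A ** X + B = X + E ** B" unfolding AX unfolding X_def E_def
    by (simp only: scalar_matrix_assoc[symmetric] mm_add_r matrix_mul_lid scaleR_minus_left rv1[unfolded scaleR_minus_left])
  have L2: "A ** X + X + B = F ** B" unfolding AX unfolding X_def F_def
    by (simp only: scalar_matrix_assoc[symmetric] mm_sub_r matrix_mul_lid scaleR_minus_left rv2[unfolded scaleR_minus_left])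
  have dotT: "x \<bullet> (transpose G *v y) = (G *v x) \<bullet> y" for G :: "real^'n^'n" and x y
    by (metis dot_lmul_matrix vector_transpose_matrix)
  have dotV: "x \<bullet> (y v* G) = (G *v x) \<bullet> y" for G :: "real^'n^'n" and x y
    by (metis dot_lmul_matrix inner_commute)
  define M where "M = transpose E ** E + F ** transpose F"
  have Minj: "\<forall>x. M *v x = 0 \<longrightarrow> x = 0"
  proof (intro allI impI)
    fix x assume Mx: "M *v x = 0"
    have dotF: "x \<bullet> (F *v y) = (transpose F *v x) \<bullet> y" for y
      using dotT[of x "transpose F" y] by simp
    have "x \<bullet> (M *v x) = (E *v x) \<bullet> (E *v x) + (transpose F *v x) \<bullet> (transpose F *v x)"
      unfolding M_def
      by (simp add: matrix_vector_mult_add_rdistrib matrix_vector_mul_assoc[symmetric] inner_add_right dotV dotF)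
    then have "(E *v x) \<bullet> (E *v x) + (transpose F *v x) \<bullet> (transpose F *v x) = 0"
      using Mx by simp
    then have Ex: "E *v x = 0" and Fx: "transpose F *v x = 0"
      by (smt (verit) inner_ge_zero inner_eq_zero_iff)+
    have "x = (E + F) *v x" using hf(9) by simp
    also have "\<dots> = F *v x" using Ex by (simp add: matrix_vector_mult_add_rdistrib)
    finally have "x \<bullet> x = x \<bullet> (F *v x)" by simp
    also have "\<dots> = 0" using dotF Fx by simp
    finally show "x = 0" by simp
  qed
  obtain N where MN: "M ** N = mat 1"
    using Minj matrix_left_invertible_ker matrix_left_right_inverse by metis
  let ?T = "transpose :: real^'n^'n \<Rightarrow> real^'n^'n"
  define K where "K = X ** ?T E ** E - F ** ?T F"
  define P where "P = E + X ** ?T F"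
  define Q where "Q = K ** N"
  define R where "R = ?T F"
  define S where "S = ?T E ** E ** N"
  define h where "h = mk P Q R S"
  have EBF: "E ** B ** ?T F = 0"
    by (metis BtF hf(3) matrix_mul_assoc times0_left)
  have FBE: "F ** B ** ?T E ** E = 0"
    by (metis BtE hf(4) matrix_mul_assoc times0_left times0_right)
  have e1: "A ** P + B ** R = P"
  proof -
    have "A ** X ** ?T F + B ** ?T F = (A ** X + B) ** ?T F" by (simp add: mm_add_r)
    also have "\<dots> = X ** ?T F" by (simp add: L1 mm_add_r EBF)
    finally show ?thesis unfolding P_def R_def
      by (simp add: matrix_add_ldistrib matrix_mul_assoc hf(5) add.assoc)
  qed
  have e2: "A ** Q + B ** S = - Q"
  proof -
    have "A ** X ** ?T E ** E + X ** ?T E ** E + B ** ?T E ** E = (A ** X + X + B) ** ?T E ** E"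
      by (simp add: mm_add_r)
    also have "\<dots> = 0" by (simp add: L2 FBE)
    finally have z: "A ** X ** ?T E ** E + X ** ?T E ** E + B ** ?T E ** E = 0" .
    have "A ** K + B ** ?T E ** E = - K"
      unfolding K_def using z
      by (simp add: mm_sub_l matrix_mul_assoc hf(6) mm_neg_r algebra_simps)
    then have "(A ** K + B ** ?T E ** E) ** N = - K ** N" by simp
    then show ?thesis unfolding Q_def S_def
      by (simp add: mm_add_r matrix_mul_assoc mm_neg_r)
  qed
  have e3: "?T A ** R = - R" unfolding R_def by (rule tAF)
  have e4: "?T A ** S = S" unfolding S_def by (simp add: matrix_mul_assoc tAE)
  have tau_h: "tau h = \<gamma> ** h"
    unfolding h_def g DA tau_mk mk_mult
    by (simp add: e1 e2 e3 e4)
  have tP: "?T P = ?T E + F ** X" unfolding P_def by (simp add: tr_add tr_mul tX)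
  have tR: "?T R = F" unfolding R_def by simp
  have s1: "?T P ** R = ?T R ** P"
  proof -
    have "?T P ** R = F ** X ** ?T F" unfolding tP R_def by (simp add: mm_add_r tEF matrix_mul_assoc)
    moreover have "?T R ** P = F ** X ** ?T F" unfolding tR P_def
      by (simp add: matrix_add_ldistrib hf(4) matrix_mul_assoc)
    ultimately show ?thesis by simp
  qed
  have s2: "?T P ** S - ?T R ** Q = mat 1"
  proof -
    have a: "?T P ** S = (?T E ** E + F ** X ** ?T E ** E) ** N" unfolding tP S_def
      by (simp add: mm_add_r matrix_mul_assoc tEE)
    have b: "?T R ** Q = (F ** X ** ?T E ** E - F ** ?T F) ** N" unfolding tR Q_def K_def
      by (simp add: mm_sub_l matrix_mul_assoc hf(2))
    have "?T P ** S - ?T R ** Q = ((?T E ** E + F ** X ** ?T E ** E) - (F ** X ** ?T E ** E - F ** ?T F)) ** N"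
      by (simp only: a b mm_sub_r)
    also have "\<dots> = M ** N" unfolding M_def by (simp add: algebra_simps)
    finally show ?thesis using MN by simp
  qed
  have s3: "?T Q ** R - ?T S ** P = - mat 1"
  proof -
    have "?T (?T P ** S - ?T R ** Q) = mat 1" using s2 by simp
    then have "?T S ** P - ?T Q ** R = mat 1" by (simp add: tr_sub tr_mul)
    then show ?thesis by (simp add: algebra_simps)
  qed
  have s4: "?T Q ** S = ?T S ** Q"
  proof -
    have tK: "?T K = ?T E ** E ** X - F ** ?T F" unfolding K_def
      by (simp add: tr_sub tr_mul tX matrix_mul_assoc)
    have c: "?T K ** (?T E ** E) = ?T E ** E ** K"
    proof -
      have z1: "F ** ?T F ** ?T E = 0" by (metis matrix_mul_assoc tFE times0_right)
      have z2: "?T E ** E ** F = 0" by (metis matrix_mul_assoc hf(3) times0_right)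
      show ?thesis unfolding tK unfolding K_def
        by (simp add: mm_sub_l mm_sub_r matrix_mul_assoc z1 z2)
    qed
    have "?T Q ** S = ?T N ** (?T K ** (?T E ** E)) ** N" unfolding Q_def S_def
      by (simp add: tr_mul matrix_mul_assoc)
    also have "\<dots> = ?T N ** (?T E ** E ** K) ** N" by (simp only: c)
    also have "\<dots> = ?T S ** Q" unfolding Q_def S_def
      by (simp add: tr_mul matrix_mul_assoc)
    finally show ?thesis .
  qed
  have hSp: "h \<in> Sp"
    unfolding Sp_def h_def mem_Collect_eq unfolding J_mk mk_transpose unfolding mk_mult
    using s1 s2 s3 s4
    by (simp add: mm_neg_l mm_neg_r mk_eq_iff algebra_simps)
  have JJ: "(- Jmat) ** (Jmat :: 'n mat2n) = mat 1"
    by (simp add: J_mk one_mk mk_mult mm_neg_r mm_neg_l tr_neg mk_neg)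
  have hJ: "transpose h ** Jmat ** h = Jmat" using hSp by (simp add: Sp_def)
  have "((- Jmat) ** transpose h ** Jmat) ** h = mat 1"
    using hJ JJ by (metis matrix_mul_assoc)
  then have invh: "invertible h" using invertible_left_inverse by blast
  have hinv: "h ** matrix_inv h = mat 1"
    using invh unfolding invertible_def matrix_inv_def by (rule someI_ex[THEN conjunct1])
  have "\<gamma> = \<gamma> ** (h ** matrix_inv h)" using hinv by simp
  also have "\<dots> = tau h ** matrix_inv h" by (simp add: tau_h matrix_mul_assoc)
  finally show ?thesis using hSp by blast
qed

end
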